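(* Let $p\ge3$ be a prime, $P$ cyclic of order $p$, and $K\le\mathrm{Aut}(P)$. For $i,j\in\{1,2,3\}$ with $i\ne j$ such that $|\sigma_i|$ and $|\sigma_j|$ divide $|K|$, the $S$-rings $\mathcal{A}_i(K)$ and $\mathcal{A}_j(K)$ are not algebraically isomorphic.
   Context: $E_1=\langle a\rangle\times\langle b\rangle$ with $|a|=|b|=2$, $E_2=\langle c\rangle$ with $|c|=4$. $\sigma_1\in\mathrm{Aut}(E_1)$: $a\mapsto b$, $b\mapsto ab$ (order 3); $\sigma_2\in\mathrm{Aut}(E_1)$: $a\mapsto b$, $b\mapsto a$ (order 2); $\sigma_3\in\mathrm{Aut}(E_2)$: $c\mapsto c^{-1}$ (order 2). Let $E=E_1$ for $i=1,2$ and $E=E_2$ for $i=3$, $G=E\times P$. For $K\le\mathrm{Aut}(P)$ with $|\sigma_i|$ dividing $|K|$: fix a generator $\theta$ of $K$, let $M\le K$ have index $|\sigma_i|$, let $\psi:\langle\sigma_i\rangle\to K/M$, $\sigma_i^k\mapsto M\theta^k$, and $A(\langle\sigma_i\rangle,K,\psi)=\{(x,y)\in\langle\sigma_i\rangle\times K:x^\psi=yM\}\le\mathrm{Aut}(E)\times\mathrm{Aut}(P)\le\mathrm{Aut}(G)$. Then $\mathcal{A}_i(K)=\mathrm{Cyc}(A(\langle\sigma_i\rangle,K,\psi),G)$, where for $A\le\mathrm{Aut}(G)$, $\mathrm{Cyc}(A,G)$ is the $S$-ring over $G$ whose basic sets are the $A$-orbits on $G$. An $S$-ring over $G$ is a subring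 of $\mathbb{Z}G$ spanned by $\underline{X}=\sum_{x\in X}x$ over a partition $\mathcal{S}$ (basic sets) of $G$ containing $\{e\}$ and closed under inversion; structure constants $c^Z_{X,Y}$ count pairs $(x,y)\in X\times Y$ with $xy=z$ for fixed $z\in Z$. An algebraic isomorphism is a bijection between the sets of basic sets preserving all structure constants. *)

theory Defs
  imports "HOL-Algebra.Algebra"
begin

definition Cyc :: "('a \<Rightarrow> 'a) set \<Rightarrow> ('a, 'm) monoid_scheme \<Rightarrow> 'a set set" where
  "Cyc A G = (\<lambda>g. (\<lambda>f. f g) ` A) ` carrier G"

text \<open>Structure constant c^Z_{X,Y}: number of pairs (x,y) in X x Y with x y = z,
  for a fixed element z of Z.\<close>
definition struct_const :: "('a, 'm) monoid_scheme \<Rightarrow> 'a set \<Rightarrow> 'a set \<Rightarrow> 'a set \<Rightarrow> nat" where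
  "struct_const G B1 B2 B3 = card {(x, y). x \<in> B1 \<and> y \<in> B2 \<and> x \<otimes>\<^bsub>G\<^esub> y = (SOME z. z \<in> B3)}"

definition alg_isomorphic ::
  "('a, 'm) monoid_scheme \<Rightarrow> 'a set set \<Rightarrow> ('b, 'n) monoid_scheme \<Rightarrow> 'b set set \<Rightarrow> bool" where
  "alg_isomorphic G S H T =
     (\<exists>f. bij_betw f S T \<and>
          (\<forall>B1\<in>S. \<forall>B2\<in>S. \<forall>B3\<in>S. struct_const H (f B1) (f B2) (f B3) = struct_const G B1 B2 B3))"

text \<open>E_1 = <a> x <b> with |a| = |b| = 2, written additively: a = (1,0), b = (0,1).\<close>
definition E1 :: "(int \<times> int) monoid" where
  "E1 = integer_mod_group 2 \<times>\<times> integer_mod_group 2"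

text \<open>E_2 = <c> with |c| = 4, c = 1.\<close>
definition E2 :: "int monoid" where
  "E2 = integer_mod_group 4"

text \<open>sigma_1: a -> b, b -> ab, i.e. a^s b^t -> b^s (ab)^t = a^t b^(s+t).\<close>
definition sigma1 :: "int \<times> int \<Rightarrow> int \<times> int" where
  "sigma1 e = (snd e, (fst e + snd e) mod 2)"

definition sigma2 :: "int \<times> int \<Rightarrow> int \<times> int" where
  "sigma2 e = (snd e, fst e)"

definition sigma3 :: "int \<Rightarrow> int" where
  "sigma3 e = (- e) mod 4"

text \<open>A(<sigma>,K,psi) = {(x,y) in <sigma> x K : x^psi = yM}, where psi(sigma^k) = M theta^k
  (cosets taken in Aut(P)).\<close>
definition Apsi :: "('e \<Rightarrow> 'e) \<Rightarrow> ('p, 'z) monoid_scheme \<Rightarrow> ('p \<Rightarrow> 'p) set \<Rightarrow> ('p \<Rightarrow> 'p)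
                    \<Rightarrow> ('p \<Rightarrow> 'p) set \<Rightarrow> (('e \<Rightarrow> 'e) \<times> ('p \<Rightarrow> 'p)) set" where
  "Apsi \<sigma> P K \<theta> M =
     {(x, y). y \<in> K \<and>
        (\<exists>k::nat. x = \<sigma> ^^ k \<and>
           y <#\<^bsub>AutoGroup P\<^esub> M = M #>\<^bsub>AutoGroup P\<^esub> (\<theta> [^]\<^bsub>AutoGroup P\<^esub> k))}"

definition prod_aut :: "('e \<Rightarrow> 'e) \<times> ('p \<Rightarrow> 'p) \<Rightarrow> ('e \<times> 'p \<Rightarrow> 'e \<times> 'p)" where
  "prod_aut xy = (\<lambda>g. (fst xy (fst g), snd xy (snd g)))"

definition SA :: "('e, 'w) monoid_scheme \<Rightarrow> ('e \<Rightarrow> 'e) \<Rightarrow> ('p, 'z) monoid_scheme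
                  \<Rightarrow> ('p \<Rightarrow> 'p) set \<Rightarrow> ('p \<Rightarrow> 'p) \<Rightarrow> ('p \<Rightarrow> 'p) set \<Rightarrow> ('e \<times> 'p) set set" where
  "SA E \<sigma> P K \<theta> M = Cyc (prod_aut ` Apsi \<sigma> P K \<theta> M) (E \<times>\<times> P)"

definition index_subgroup :: "('p, 'z) monoid_scheme \<Rightarrow> ('p \<Rightarrow> 'p) set \<Rightarrow> ('p \<Rightarrow> 'p) set \<Rightarrow> nat \<Rightarrow> bool" where
  "index_subgroup P K M n = (subgroup M (AutoGroup P) \<and> M \<subseteq> K \<and> card K = n * card M)"

end

theory Submission
  imports Defs
begin

locale ctx =
  fixes P :: "('p, 'z) monoid_scheme" and K :: "('p \<Rightarrow> 'p) set" and \<theta> :: "'p \<Rightarrow> 'p"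
  assumes grpP: "group P" and finP: "finite (carrier P)"
    and subK: "subgroup K (AutoGroup P)" and thK: "\<theta> \<in> K"
    and genK: "generate (AutoGroup P) {\<theta>} = K"
begin

abbreviation "AG \<equiv> AutoGroup P"

lemma grpAG: "group AG"
  using group.AutoGroup[OF grpP] .

sublocale AGG: group "AutoGroup P" by (rule grpAG)

lemma carrAG: "carrier AG = auto P"
  by (simp add: AutoGroup_def)

lemma multAG: "a \<in> auto P \<Longrightarrow> b \<in> auto P \<Longrightarrow> q \<in> carrier P \<Longrightarrow> (a \<otimes>\<^bsub>AG\<^esub> b) q = a (b q)"
  by (auto simp: AutoGroup_def BijGroup_def auto_def compose_def)

lemma oneAG: "q \<in> carrier P \<Longrightarrow> \<one>\<^bsub>AG\<^esub> q = q"
  by (simp add: AutoGroup_def BijGroup_def)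

lemma auto_hom: "a \<in> auto P \<Longrightarrow> group_hom P P a"
  using grpP by (simp add: group_hom_def group_hom_axioms_def auto_def)

lemma auto_carr: "a \<in> auto P \<Longrightarrow> q \<in> carrier P \<Longrightarrow> a q \<in> carrier P"
  by (auto simp: auto_def hom_def)

lemma auto_one: "a \<in> auto P \<Longrightarrow> a \<one>\<^bsub>P\<^esub> = \<one>\<^bsub>P\<^esub>"
  using group_hom.hom_one[OF auto_hom] by blast

lemma auto_mult: "a \<in> auto P \<Longrightarrow> q \<in> carrier P \<Longrightarrow> r \<in> carrier P \<Longrightarrow> a (q \<otimes>\<^bsub>P\<^esub> r) = a q \<otimes>\<^bsub>P\<^esub> a r"
  by (auto simp: auto_def hom_def)

lemma auto_inv: "a \<in> auto P \<Longrightarrow> q \<in> carrier P \<Longrightarrow> a (inv\<^bsub>P\<^esub> q) = inv\<^bsub>P\<^esub> (a q)"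
  using group_hom.hom_inv[OF auto_hom] by blast

lemma auto_ipow: "a \<in> auto P \<Longrightarrow> q \<in> carrier P \<Longrightarrow> a (q [^]\<^bsub>P\<^esub> (i::int)) = a q [^]\<^bsub>P\<^esub> i"
  using group_hom.hom_int_pow[OF auto_hom] by blast

lemma auto_inj1: "a \<in> auto P \<Longrightarrow> q \<in> carrier P \<Longrightarrow> a q = \<one>\<^bsub>P\<^esub> \<Longrightarrow> q = \<one>\<^bsub>P\<^esub>"
proof -
  assume a: "a \<in> auto P" and q: "q \<in> carrier P" and e: "a q = \<one>\<^bsub>P\<^esub>"
  have "inj_on a (carrier P)" using a by (auto simp: auto_def Bij_def bij_betw_def)
  moreover have "a \<one>\<^bsub>P\<^esub> = \<one>\<^bsub>P\<^esub>" using auto_one[OF a] .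
  ultimately show ?thesis using q e monoid.one_closed[OF group.is_monoid[OF grpP]] by (metis inj_on_def)
qed

lemma auto_ext: "a \<in> auto P \<Longrightarrow> a \<in> extensional (carrier P)"
  by (simp add: auto_def Bij_def)

lemma finAG: "finite (auto P)"
proof -
  have "auto P \<subseteq> PiE (carrier P) (\<lambda>_. carrier P)"
  proof
    fix f assume f: "f \<in> auto P"
    show "f \<in> PiE (carrier P) (\<lambda>_. carrier P)"
    proof (rule PiE_I)
      fix x assume "x \<in> carrier P" then show "f x \<in> carrier P" using auto_carr[OF f] by blast
    next
      fix x assume "x \<notin> carrier P" then show "f x = undefined" using auto_ext[OF f] by (meson extensional_arb)
    qed
  qed
  moreover have "finite (PiE (carrier P) (\<lambda>_. carrier P))" by (rule finite_PiE) (use finP in auto)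
  ultimately show ?thesis by (rule finite_subset)
qed

lemma KAG: "K \<subseteq> auto P"
  using subgroup.subset[OF subK] carrAG by simp

lemma finK: "finite K" using KAG finAG finite_subset by blast

lemma thAG: "\<theta> \<in> carrier AG" using thK KAG carrAG by auto

lemma ord_th: "group.ord AG \<theta> = card K"
  using group.generate_pow_card[OF grpAG thAG] genK by simp

lemma cardK_pos: "card K > 0"
  using finK thK card_gt_0_iff by blast

lemma K_pows: "K = {\<theta> [^]\<^bsub>AG\<^esub> (k::nat) | k. True}"
  using group.generate_pow_nat[OF grpAG thAG] ord_th cardK_pos genK by auto

lemma pow_K: "\<theta> [^]\<^bsub>AG\<^esub> (k::nat) \<in> K"
  using K_pows by blast

lemma K_comm: "a \<in> K \<Longrightarrow> b \<in> K \<Longrightarrow> a \<otimes>\<^bsub>AG\<^esub> b = b \<otimes>\<^bsub>AG\<^esub> a"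
proof -
  assume "a \<in> K" "b \<in> K"
  then obtain i j where "a = \<theta> [^]\<^bsub>AG\<^esub> (i::nat)" "b = \<theta> [^]\<^bsub>AG\<^esub> (j::nat)" using K_pows by blast
  then show ?thesis using monoid.nat_pow_mult[OF group.is_monoid[OF grpAG] thAG] by (metis add.commute)
qed

lemma th_card: "\<theta> [^]\<^bsub>AG\<^esub> card K = \<one>\<^bsub>AG\<^esub>"
  using group.pow_ord_eq_1[OF grpAG thAG] ord_th by simp

lemma KG: "K \<subseteq> carrier AG" using KAG carrAG by simp

lemma lcos_rcos: "y \<in> K \<Longrightarrow> N \<subseteq> K \<Longrightarrow> y <#\<^bsub>AG\<^esub> N = N #>\<^bsub>AG\<^esub> y"
  unfolding l_coset_def r_coset_def using K_comm by auto

end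

locale ctxM = ctx +
  fixes M
  assumes subM: "subgroup M (AutoGroup P)" and MK: "M \<subseteq> K"
begin

lemma MG: "M \<subseteq> carrier AG" using MK KG by auto

lemma Apsi_eq: "Apsi \<sigma> P K \<theta> M = {(\<sigma> ^^ k, m \<otimes>\<^bsub>AG\<^esub> (\<theta> [^]\<^bsub>AG\<^esub> k)) | k m. m \<in> M}"
proof (rule Set.set_eqI, rule iffI)
  fix z assume "z \<in> Apsi \<sigma> P K \<theta> M"
  then obtain x y k where z: "z = (x, y)" "y \<in> K" "x = \<sigma> ^^ k"
      "y <#\<^bsub>AG\<^esub> M = M #>\<^bsub>AG\<^esub> (\<theta> [^]\<^bsub>AG\<^esub> k)"
    unfolding Apsi_def by blast
  have "y \<in> y <#\<^bsub>AG\<^esub> M"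
    unfolding l_coset_def using subgroup.one_closed[OF subM] z(2) KG
    by (force intro!: UN_I[of "\<one>\<^bsub>AG\<^esub>"] simp: AGG.r_one)
  then have "y \<in> M #>\<^bsub>AG\<^esub> (\<theta> [^]\<^bsub>AG\<^esub> k)" using z(4) by simp
  then obtain m where "m \<in> M" "y = m \<otimes>\<^bsub>AG\<^esub> (\<theta> [^]\<^bsub>AG\<^esub> k)" unfolding r_coset_def by blast
  then show "z \<in> {(\<sigma> ^^ k, m \<otimes>\<^bsub>AG\<^esub> (\<theta> [^]\<^bsub>AG\<^esub> k)) | k m. m \<in> M}" using z by blast
next
  fix z assume "z \<in> {(\<sigma> ^^ k, m \<otimes>\<^bsub>AG\<^esub> (\<theta> [^]\<^bsub>AG\<^esub> k)) | k m. m \<in> M}"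
  then obtain k m where z: "z = (\<sigma> ^^ k, m \<otimes>\<^bsub>AG\<^esub> (\<theta> [^]\<^bsub>AG\<^esub> k))" "m \<in> M" by blast
  define y where "y = m \<otimes>\<^bsub>AG\<^esub> (\<theta> [^]\<^bsub>AG\<^esub> k)"
  have yK: "y \<in> K" unfolding y_def using subgroup.m_closed[OF subK] z(2) MK pow_K by blast
  have tk: "\<theta> [^]\<^bsub>AG\<^esub> k \<in> carrier AG" using pow_K KG by blast
  have "y \<in> M #>\<^bsub>AG\<^esub> (\<theta> [^]\<^bsub>AG\<^esub> k)" unfolding y_def r_coset_def using z(2) by blast
  then have "M #>\<^bsub>AG\<^esub> (\<theta> [^]\<^bsub>AG\<^esub> k) = M #>\<^bsub>AG\<^esub> y"
    using group.repr_independence[OF grpAG _ tk subM] by blast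
  then have "y <#\<^bsub>AG\<^esub> M = M #>\<^bsub>AG\<^esub> (\<theta> [^]\<^bsub>AG\<^esub> k)" using lcos_rcos[OF yK MK] by simp
  then show "z \<in> Apsi \<sigma> P K \<theta> M" unfolding Apsi_def using z(1) yK y_def by blast
qed

lemma mpow_K: "m \<in> M \<Longrightarrow> m \<otimes>\<^bsub>AG\<^esub> (\<theta> [^]\<^bsub>AG\<^esub> (k::nat)) \<in> K"
  using subgroup.m_closed[OF subK] MK pow_K by blast

lemma mpow_auto: "m \<in> M \<Longrightarrow> m \<otimes>\<^bsub>AG\<^esub> (\<theta> [^]\<^bsub>AG\<^esub> (k::nat)) \<in> auto P"
  using mpow_K KAG by blast

lemma MAG: "m \<in> M \<Longrightarrow> m \<in> carrier AG" using MG by blast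
lemma powAG: "\<theta> [^]\<^bsub>AG\<^esub> (k::nat) \<in> carrier AG" using pow_K KG by blast

lemma mpow_comp: "m \<in> M \<Longrightarrow> m' \<in> M \<Longrightarrow>
   (m' \<otimes>\<^bsub>AG\<^esub> (\<theta> [^]\<^bsub>AG\<^esub> (j::nat))) \<otimes>\<^bsub>AG\<^esub> (m \<otimes>\<^bsub>AG\<^esub> (\<theta> [^]\<^bsub>AG\<^esub> (k::nat)))
   = (m' \<otimes>\<^bsub>AG\<^esub> m) \<otimes>\<^bsub>AG\<^esub> (\<theta> [^]\<^bsub>AG\<^esub> (j + k))"
proof -
  assume m: "m \<in> M" and m': "m' \<in> M"
  have c: "\<theta> [^]\<^bsub>AG\<^esub> j \<otimes>\<^bsub>AG\<^esub> m = m \<otimes>\<^bsub>AG\<^esub> \<theta> [^]\<^bsub>AG\<^esub> j"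
    using K_comm pow_K m MK by blast
  have "(m' \<otimes>\<^bsub>AG\<^esub> (\<theta> [^]\<^bsub>AG\<^esub> j)) \<otimes>\<^bsub>AG\<^esub> (m \<otimes>\<^bsub>AG\<^esub> (\<theta> [^]\<^bsub>AG\<^esub> k))
     = m' \<otimes>\<^bsub>AG\<^esub> ((\<theta> [^]\<^bsub>AG\<^esub> j \<otimes>\<^bsub>AG\<^esub> m) \<otimes>\<^bsub>AG\<^esub> \<theta> [^]\<^bsub>AG\<^esub> k)"
    using MAG[OF m] MAG[OF m'] powAG by (simp add: AGG.m_assoc)
  also have "\<dots> = m' \<otimes>\<^bsub>AG\<^esub> (m \<otimes>\<^bsub>AG\<^esub> (\<theta> [^]\<^bsub>AG\<^esub> j \<otimes>\<^bsub>AG\<^esub> \<theta> [^]\<^bsub>AG\<^esub> k))"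
    using MAG[OF m] MAG[OF m'] powAG by (simp add: c AGG.m_assoc)
  also have "\<dots> = (m' \<otimes>\<^bsub>AG\<^esub> m) \<otimes>\<^bsub>AG\<^esub> (\<theta> [^]\<^bsub>AG\<^esub> (j + k))"
    using MAG[OF m] MAG[OF m'] powAG thAG by (simp add: AGG.m_assoc AGG.nat_pow_mult)
  finally show ?thesis .
qed

end

definition unitB :: "('a, 'm) monoid_scheme \<Rightarrow> 'a set set \<Rightarrow> 'a set \<Rightarrow> bool" where
  "unitB G S B = (\<forall>Y\<in>S. \<forall>Z\<in>S. struct_const G B Y Z = (if Y = Z then 1 else 0))"

locale ctxE = ctxM +
  fixes E and \<sigma>
  assumes grpE: "group E" and finE: "finite (carrier E)"
    and s_carr: "\<And>x. x \<in> carrier E \<Longrightarrow> \<sigma> x \<in> carrier E"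
    and s6: "\<And>x. x \<in> carrier E \<Longrightarrow> (\<sigma> ^^ 6) x = x"
    and s_one: "\<sigma> \<one>\<^bsub>E\<^esub> = \<one>\<^bsub>E\<^esub>"
    and s_inj1: "\<And>x. x \<in> carrier E \<Longrightarrow> \<sigma> x = \<one>\<^bsub>E\<^esub> \<Longrightarrow> x = \<one>\<^bsub>E\<^esub>"
begin

abbreviation "GG \<equiv> E \<times>\<times> P"

lemma grpG: "group GG" using DirProd_group[OF grpE grpP] .

definition act where
  "act k m g = ((\<sigma> ^^ k) (fst g), (m \<otimes>\<^bsub>AG\<^esub> (\<theta> [^]\<^bsub>AG\<^esub> k)) (snd g))"

definition Orb where "Orb g = {act k m g | k m. m \<in> M}"

lemma SA_eq: "SA E \<sigma> P K \<theta> M = Orb ` carrier GG"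
proof -
  have "(\<lambda>f. f g) ` prod_aut ` Apsi \<sigma> P K \<theta> M = Orb g" for g
    unfolding Apsi_eq Orb_def act_def prod_aut_def by (auto simp: image_iff; blast)
  then show ?thesis unfolding SA_def Cyc_def by simp
qed

lemma spow_carr: "x \<in> carrier E \<Longrightarrow> (\<sigma> ^^ k) x \<in> carrier E"
  by (induction k) (auto simp: s_carr)

lemma spow_one: "(\<sigma> ^^ k) \<one>\<^bsub>E\<^esub> = \<one>\<^bsub>E\<^esub>"
  by (induction k) (auto simp: s_one)

lemma spow_inj1: "x \<in> carrier E \<Longrightarrow> (\<sigma> ^^ k) x = \<one>\<^bsub>E\<^esub> \<Longrightarrow> x = \<one>\<^bsub>E\<^esub>"
  by (induction k) (auto simp: s_inj1 spow_carr)

lemma spow6: "x \<in> carrier E \<Longrightarrow> (\<sigma> ^^ (6 * t)) x = x"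
proof (induction t)
  case 0 then show ?case by simp
next
  case (Suc t)
  have "(\<sigma> ^^ (6 * Suc t)) x = (\<sigma> ^^ 6) ((\<sigma> ^^ (6 * t)) x)"
    by (simp add: funpow_add)
  then show ?case using Suc s6 by simp
qed

lemma act_carr: "g \<in> carrier GG \<Longrightarrow> m \<in> M \<Longrightarrow> act k m g \<in> carrier GG"
  unfolding act_def using spow_carr auto_carr[OF mpow_auto] by (auto simp: mem_Times_iff)

lemma act_comp: "g \<in> carrier GG \<Longrightarrow> m \<in> M \<Longrightarrow> m' \<in> M \<Longrightarrow>
    act j m' (act k m g) = act (j + k) (m' \<otimes>\<^bsub>AG\<^esub> m) g"
proof -
  assume g: "g \<in> carrier GG" and m: "m \<in> M" and m': "m' \<in> M"
  have "(m' \<otimes>\<^bsub>AG\<^esub> (\<theta> [^]\<^bsub>AG\<^esub> j)) ((m \<otimes>\<^bsub>AG\<^esub> (\<theta> [^]\<^bsub>AG\<^esub> k)) (snd g))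
     = ((m' \<otimes>\<^bsub>AG\<^esub> (\<theta> [^]\<^bsub>AG\<^esub> j)) \<otimes>\<^bsub>AG\<^esub> (m \<otimes>\<^bsub>AG\<^esub> (\<theta> [^]\<^bsub>AG\<^esub> k))) (snd g)"
    using multAG[OF mpow_auto[OF m'] mpow_auto[OF m]] g by (auto simp: mem_Times_iff)
  also have "\<dots> = ((m' \<otimes>\<^bsub>AG\<^esub> m) \<otimes>\<^bsub>AG\<^esub> (\<theta> [^]\<^bsub>AG\<^esub> (j + k))) (snd g)"
    using mpow_comp[OF m m'] by simp
  finally show ?thesis unfolding act_def by (simp add: funpow_add)
qed

lemma act_id: "g \<in> carrier GG \<Longrightarrow> act 0 \<one>\<^bsub>AG\<^esub> g = g"
  unfolding act_def by (auto simp: oneAG mem_Times_iff)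

lemma th_pow_L: "\<theta> [^]\<^bsub>AG\<^esub> (card K * t) = \<one>\<^bsub>AG\<^esub>"
  using AGG.nat_pow_pow[OF thAG] th_card by (metis AGG.nat_pow_one)

lemma act_L: "g \<in> carrier GG \<Longrightarrow> act (6 * card K * t) \<one>\<^bsub>AG\<^esub> g = g"
proof -
  assume g: "g \<in> carrier GG"
  have "\<theta> [^]\<^bsub>AG\<^esub> (6 * card K * t) = \<one>\<^bsub>AG\<^esub>" using th_pow_L[of "6 * t"] by (simp add: ac_simps)
  moreover have "(\<sigma> ^^ (6 * card K * t)) (fst g) = fst g" using spow6[of "fst g" "card K * t"] g
    by (auto simp: mem_Times_iff ac_simps)
  ultimately show ?thesis using g unfolding act_def by (auto simp: oneAG mem_Times_iff)
qed

lemma Orb_self: "g \<in> carrier GG \<Longrightarrow> g \<in> Orb g"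
proof -
  assume g: "g \<in> carrier GG"
  have "g = act 0 \<one>\<^bsub>AG\<^esub> g" using act_id[OF g] by simp
  then show ?thesis unfolding Orb_def using subgroup.one_closed[OF subM] by blast
qed

lemma Orb_carr: "g \<in> carrier GG \<Longrightarrow> Orb g \<subseteq> carrier GG"
  unfolding Orb_def using act_carr by blast

lemma Orb_trans: "g \<in> carrier GG \<Longrightarrow> h \<in> Orb g \<Longrightarrow> Orb h \<subseteq> Orb g"
proof
  fix x assume g: "g \<in> carrier GG" and h: "h \<in> Orb g" and x: "x \<in> Orb h"
  obtain k m where km: "m \<in> M" "h = act k m g" using h unfolding Orb_def by blast
  obtain j m' where jm: "m' \<in> M" "x = act j m' h" using x unfolding Orb_def by blast
  have "x = act (j + k) (m' \<otimes>\<^bsub>AG\<^esub> m) g" using act_comp[OF g km(1) jm(1)] km jm by simp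
  moreover have "m' \<otimes>\<^bsub>AG\<^esub> m \<in> M" using subgroup.m_closed[OF subM] km jm by blast
  ultimately show "x \<in> Orb g" unfolding Orb_def by blast
qed

lemma Orb_sym: "g \<in> carrier GG \<Longrightarrow> h \<in> Orb g \<Longrightarrow> g \<in> Orb h"
proof -
  assume g: "g \<in> carrier GG" and h: "h \<in> Orb g"
  obtain k m where km: "m \<in> M" "h = act k m g" using h unfolding Orb_def by blast
  have im: "inv\<^bsub>AG\<^esub> m \<in> M" using subgroup.m_inv_closed[OF subM km(1)] .
  have e: "(6 * card K - 1) * k + k = 6 * card K * k"
  proof -
    obtain c where c: "card K = Suc c" using cardK_pos gr0_conv_Suc by blast
    show ?thesis unfolding c by (simp add: algebra_simps)
  qed
  have "act ((6 * card K - 1) * k) (inv\<^bsub>AG\<^esub> m) h = act (6 * card K * k) \<one>\<^bsub>AG\<^esub> g"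
    using act_comp[OF g km(1) im] km(2) e AGG.l_inv[OF MAG[OF km(1)]] by simp
  also have "\<dots> = g" using act_L[OF g] .
  finally show ?thesis unfolding Orb_def using im by blast
qed

lemma Orb_eq: "g \<in> carrier GG \<Longrightarrow> h \<in> Orb g \<Longrightarrow> Orb h = Orb g"
  using Orb_trans Orb_sym Orb_carr by (meson subsetD subset_antisym)

lemma act_one: "act k m \<one>\<^bsub>GG\<^esub> = \<one>\<^bsub>GG\<^esub>" if "m \<in> M"
  unfolding act_def using spow_one auto_one[OF mpow_auto[OF that]] by simp

lemma act_one_inj: "g \<in> carrier GG \<Longrightarrow> m \<in> M \<Longrightarrow> act k m g = \<one>\<^bsub>GG\<^esub> \<Longrightarrow> g = \<one>\<^bsub>GG\<^esub>"
  unfolding act_def using spow_inj1 auto_inj1[OF mpow_auto]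
  by (auto simp: mem_Times_iff prod_eq_iff)

lemma Orb_one: "Orb \<one>\<^bsub>GG\<^esub> = {\<one>\<^bsub>GG\<^esub>}"
proof -
  have "Orb \<one>\<^bsub>GG\<^esub> \<subseteq> {\<one>\<^bsub>GG\<^esub>}" unfolding Orb_def using act_one by auto
  moreover have "\<one>\<^bsub>GG\<^esub> \<in> Orb \<one>\<^bsub>GG\<^esub>" using Orb_self group.is_monoid[OF grpG] monoid.one_closed by blast
  ultimately show ?thesis by blast
qed

lemma one_in_Orb: "g \<in> carrier GG \<Longrightarrow> \<one>\<^bsub>GG\<^esub> \<in> Orb g \<Longrightarrow> g = \<one>\<^bsub>GG\<^esub>"
proof -
  assume g: "g \<in> carrier GG" and "\<one>\<^bsub>GG\<^esub> \<in> Orb g"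
  then obtain k m where "m \<in> M" "\<one>\<^bsub>GG\<^esub> = act k m g" unfolding Orb_def by blast
  then show ?thesis using act_one_inj[OF g] by metis
qed

lemma oneG: "\<one>\<^bsub>GG\<^esub> \<in> carrier GG" using group.is_monoid[OF grpG] monoid.one_closed by blast

lemma finG: "finite (carrier GG)" using finE finP by simp

lemma SA_one_in: "{\<one>\<^bsub>GG\<^esub>} \<in> SA E \<sigma> P K \<theta> M"
  unfolding SA_eq using Orb_one oneG by (metis imageI)

lemma SA_unit: "unitB GG (SA E \<sigma> P K \<theta> M) {\<one>\<^bsub>GG\<^esub>}"
  unfolding unitB_def
proof (intro ballI)
  fix Y Z assume Y: "Y \<in> SA E \<sigma> P K \<theta> M" and Z: "Z \<in> SA E \<sigma> P K \<theta> M"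
  obtain h where h: "h \<in> carrier GG" "Y = Orb h" using Y unfolding SA_eq by blast
  obtain g where g: "g \<in> carrier GG" "Z = Orb g" using Z unfolding SA_eq by blast
  define z where "z = (SOME z. z \<in> Z)"
  have zZ: "z \<in> Z" unfolding z_def using Orb_self[OF g(1)] g(2) by (metis someI_ex)
  have zc: "z \<in> carrier GG" using zZ g Orb_carr by blast
  have set: "{(x, y). x \<in> {\<one>\<^bsub>GG\<^esub>} \<and> y \<in> Y \<and> x \<otimes>\<^bsub>GG\<^esub> y = z} = (if z \<in> Y then {(\<one>\<^bsub>GG\<^esub>, z)} else {})"
  proof -
    have "y \<in> Y \<Longrightarrow> \<one>\<^bsub>GG\<^esub> \<otimes>\<^bsub>GG\<^esub> y = y" for y
      using h Orb_carr monoid.l_one[OF group.is_monoid[OF grpG]] by blast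
    then show ?thesis by auto
  qed
  show "struct_const GG {\<one>\<^bsub>GG\<^esub>} Y Z = (if Y = Z then 1 else 0)"
  proof (cases "Y = Z")
    case True
    then show ?thesis unfolding struct_const_def z_def[symmetric] set using zZ by simp
  next
    case False
    have "z \<notin> Y"
    proof
      assume "z \<in> Y"
      then have "Orb z = Y" using Orb_eq h by blast
      moreover have "Orb z = Z" using Orb_eq g zZ by blast
      ultimately show False using False by simp
    qed
    then show ?thesis unfolding struct_const_def z_def[symmetric] set using False by simp
  qed
qed

lemma SA_unit_uniq: "B \<in> SA E \<sigma> P K \<theta> M \<Longrightarrow> unitB GG (SA E \<sigma> P K \<theta> M) B \<Longrightarrow> B = {\<one>\<^bsub>GG\<^esub>}"
proof -
  assume B: "B \<in> SA E \<sigma> P K \<theta> M" and u: "unitB GG (SA E \<sigma> P K \<theta> M) B"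
  obtain g where g: "g \<in> carrier GG" "B = Orb g" using B unfolding SA_eq by blast
  have "struct_const GG B {\<one>\<^bsub>GG\<^esub>} {\<one>\<^bsub>GG\<^esub>} = 1" using u SA_one_in unfolding unitB_def by simp
  moreover have "(SOME z. z \<in> {\<one>\<^bsub>GG\<^esub>}) = \<one>\<^bsub>GG\<^esub>" by simp
  ultimately have "card {(x, y). x \<in> B \<and> y \<in> {\<one>\<^bsub>GG\<^esub>} \<and> x \<otimes>\<^bsub>GG\<^esub> y = \<one>\<^bsub>GG\<^esub>} = 1"
    unfolding struct_const_def by simp
  then have "{(x, y). x \<in> B \<and> y \<in> {\<one>\<^bsub>GG\<^esub>} \<and> x \<otimes>\<^bsub>GG\<^esub> y = \<one>\<^bsub>GG\<^esub>} \<noteq> {}"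
    by (metis card.empty zero_neq_one)
  then obtain x where x: "x \<in> B" "x \<otimes>\<^bsub>GG\<^esub> \<one>\<^bsub>GG\<^esub> = \<one>\<^bsub>GG\<^esub>" by blast
  have "x \<in> carrier GG" using x g Orb_carr by blast
  then have "x = \<one>\<^bsub>GG\<^esub>" using x(2) monoid.r_one[OF group.is_monoid[OF grpG]] by metis
  then have "g = \<one>\<^bsub>GG\<^esub>" using one_in_Orb g x(1) by blast
  then show ?thesis using g Orb_one by simp
qed

end

lemma E1_carr: "carrier E1 = {0..<2} \<times> {0..<2}"
  by (simp add: E1_def carrier_integer_mod_group)
lemma E1_one: "\<one>\<^bsub>E1\<^esub> = (0,0)" by (simp add: E1_def)
lemma E1_mult: "x \<otimes>\<^bsub>E1\<^esub> y = ((fst x + fst y) mod 2, (snd x + snd y) mod 2)"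
  by (simp add: E1_def mult_DirProd')
lemma E1_grp: "group E1" by (simp add: E1_def DirProd_group)
lemma E1_fin: "finite (carrier E1)" by (simp add: E1_carr)
lemma E1_cases: "x \<in> carrier E1 \<Longrightarrow> x = (0,0) \<or> x = (0,1) \<or> x = (1,0) \<or> x = (1,1)"
  by (auto simp: E1_carr)

lemma E2_carr: "carrier E2 = {0..<4}" by (simp add: E2_def carrier_integer_mod_group)
lemma E2_one: "\<one>\<^bsub>E2\<^esub> = 0" by (simp add: E2_def)
lemma E2_mult: "x \<otimes>\<^bsub>E2\<^esub> y = (x + y) mod 4" by (simp add: E2_def)
lemma E2_grp: "group E2" by (simp add: E2_def)
lemma E2_fin: "finite (carrier E2)" by (simp add: E2_carr)
lemma E2_cases: "x \<in> carrier E2 \<Longrightarrow> x = 0 \<or> x = 1 \<or> x = 2 \<or> x = 3"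
  by (auto simp: E2_carr)

lemma funpow6: "(f ^^ 6) x = f (f (f (f (f (f x)))))"
  by (simp add: numeral_eq_Suc)
lemma s1_6: "x \<in> carrier E1 \<Longrightarrow> (sigma1 ^^ 6) x = x"
  unfolding funpow6 by (drule E1_cases) (elim disjE; simp add: sigma1_def)
lemma s2_6: "x \<in> carrier E1 \<Longrightarrow> (sigma2 ^^ 6) x = x"
  by (drule E1_cases) (elim disjE; simp add: funpow6 sigma2_def)
lemma s3_6: "x \<in> carrier E2 \<Longrightarrow> (sigma3 ^^ 6) x = x"
  by (drule E2_cases) (elim disjE; simp add: funpow6 sigma3_def)
lemma s1_carr: "x \<in> carrier E1 \<Longrightarrow> sigma1 x \<in> carrier E1"
  by (drule E1_cases) (auto simp: sigma1_def E1_carr)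
lemma s2_carr: "x \<in> carrier E1 \<Longrightarrow> sigma2 x \<in> carrier E1"
  by (drule E1_cases) (auto simp: sigma2_def E1_carr)
lemma s3_carr: "x \<in> carrier E2 \<Longrightarrow> sigma3 x \<in> carrier E2"
  by (drule E2_cases) (auto simp: sigma3_def E2_carr)
lemma s1_inj1: "x \<in> carrier E1 \<Longrightarrow> sigma1 x = \<one>\<^bsub>E1\<^esub> \<Longrightarrow> x = \<one>\<^bsub>E1\<^esub>"
  by (drule E1_cases) (auto simp: sigma1_def E1_one)
lemma s2_inj1: "x \<in> carrier E1 \<Longrightarrow> sigma2 x = \<one>\<^bsub>E1\<^esub> \<Longrightarrow> x = \<one>\<^bsub>E1\<^esub>"
  by (drule E1_cases) (auto simp: sigma2_def E1_one)
lemma s3_inj1: "x \<in> carrier E2 \<Longrightarrow> sigma3 x = \<one>\<^bsub>E2\<^esub> \<Longrightarrow> x = \<one>\<^bsub>E2\<^esub>"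
  by (drule E2_cases) (auto simp: sigma3_def E2_one)
lemma s1_one: "sigma1 \<one>\<^bsub>E1\<^esub> = \<one>\<^bsub>E1\<^esub>" by (simp add: sigma1_def E1_one)
lemma s2_one: "sigma2 \<one>\<^bsub>E1\<^esub> = \<one>\<^bsub>E1\<^esub>" by (simp add: sigma2_def E1_one)
lemma s3_one: "sigma3 \<one>\<^bsub>E2\<^esub> = \<one>\<^bsub>E2\<^esub>" by (simp add: sigma3_def E2_one)

lemma s2_pow: "(sigma2 ^^ k) (1,0) = (if even k then (1,0) else (0,1))"
  by (induction k) (auto simp: sigma2_def)
lemma s2_pow11: "(sigma2 ^^ k) (1,1) = (1,1)"
  by (induction k) (auto simp: sigma2_def)
lemma s3_pow: "(sigma3 ^^ k) 1 = (if even k then 1 else 3)"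
  by (induction k) (auto simp: sigma3_def)
lemma s3_pow2: "(sigma3 ^^ k) 2 = 2"
  by (induction k) (auto simp: sigma3_def)

locale ctxP = ctx +
  fixes p :: nat and q0
  assumes pprime: "Factorial_Ring.prime p" and p3: "p \<ge> 3" and cardP: "card (carrier P) = p"
    and q0c: "q0 \<in> carrier P" and q0gen: "carrier P = range (\<lambda>n::int. q0 [^]\<^bsub>P\<^esub> n)"
begin

sublocale PG: group P by (rule grpP)

lemma Pcomm: "q \<in> carrier P \<Longrightarrow> r \<in> carrier P \<Longrightarrow> q \<otimes>\<^bsub>P\<^esub> r = r \<otimes>\<^bsub>P\<^esub> q"
proof -
  assume "q \<in> carrier P" "r \<in> carrier P"
  then obtain a b where "q = q0 [^]\<^bsub>P\<^esub> (a::int)" "r = q0 [^]\<^bsub>P\<^esub> (b::int)" using q0gen by blast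
  then show ?thesis using PG.int_pow_mult[OF q0c, symmetric] by (simp add: add.commute)
qed

lemma ord_q0: "PG.ord q0 = p"
proof -
  have "generate P {q0} = carrier P" using PG.generate_pow[OF q0c] q0gen by auto
  then show ?thesis using PG.generate_pow_card[OF q0c] cardP by simp
qed

lemma q0_ne: "q0 \<noteq> \<one>\<^bsub>P\<^esub>"
proof
  assume "q0 = \<one>\<^bsub>P\<^esub>"
  then have "PG.ord q0 = 1" using PG.ord_eq_1[OF q0c] by simp
  then show False using ord_q0 p3 by simp
qed

lemma sq1: "q \<in> carrier P \<Longrightarrow> q \<otimes>\<^bsub>P\<^esub> q = \<one>\<^bsub>P\<^esub> \<Longrightarrow> q = \<one>\<^bsub>P\<^esub>"
proof -
  assume q: "q \<in> carrier P" and e: "q \<otimes>\<^bsub>P\<^esub> q = \<one>\<^bsub>P\<^esub>"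
  have "q [^]\<^bsub>P\<^esub> (2::nat) = \<one>\<^bsub>P\<^esub>" using e q by (simp add: numeral_eq_Suc)
  then have d2: "PG.ord q dvd 2" using PG.pow_eq_id[OF q] by simp
  have dp: "PG.ord q dvd p" using PG.ord_dvd_group_order[OF q] cardP by (simp add: order_def)
  have "PG.ord q = 1 \<or> PG.ord q = p" using dp pprime prime_nat_iff by blast
  moreover have "PG.ord q \<noteq> p"
  proof
    assume "PG.ord q = p"
    then have "p \<le> 2" using d2 dvd_imp_le by fastforce
    then show False using p3 by simp
  qed
  ultimately have "PG.ord q = 1" by blast
  then show ?thesis using PG.ord_eq_1[OF q] by simp
qed

lemma auto_eq: "a \<in> auto P \<Longrightarrow> b \<in> auto P \<Longrightarrow> a q0 = b q0 \<Longrightarrow> a = b"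
proof -
  assume a: "a \<in> auto P" and b: "b \<in> auto P" and e: "a q0 = b q0"
  have "\<forall>q\<in>carrier P. a q = b q"
  proof
    fix q assume "q \<in> carrier P"
    then obtain i where "q = q0 [^]\<^bsub>P\<^esub> (i::int)" using q0gen by blast
    then show "a q = b q" using auto_ipow[OF a q0c] auto_ipow[OF b q0c] e by simp
  qed
  then show ?thesis using auto_ext[OF a] auto_ext[OF b] by (simp add: extensionalityI)
qed

definition INV where "INV = (\<lambda>q\<in>carrier P. inv\<^bsub>P\<^esub> q)"

lemma INV_app: "q \<in> carrier P \<Longrightarrow> INV q = inv\<^bsub>P\<^esub> q" by (simp add: INV_def)

lemma INV_auto: "INV \<in> auto P"
proof -
  have h: "INV \<in> hom P P"
    unfolding hom_def INV_def using Pcomm by (auto simp: PG.inv_mult_group)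
  have "bij_betw INV (carrier P) (carrier P)"
    by (rule bij_betw_byWitness[where f'=INV]) (auto simp: INV_def)
  moreover have "INV \<in> extensional (carrier P)" by (simp add: INV_def)
  ultimately show ?thesis using h by (simp add: auto_def Bij_def)
qed

lemma INV_K: "even (card K) \<Longrightarrow> INV \<in> K"
proof -
  assume ev: "even (card K)"
  then obtain r where r: "card K = 2 * r" by blast
  have rpos: "r > 0" using r cardK_pos by simp
  define \<alpha> where "\<alpha> = \<theta> [^]\<^bsub>AG\<^esub> r"
  have aK: "\<alpha> \<in> K" unfolding \<alpha>_def using pow_K .
  have aA: "\<alpha> \<in> auto P" using aK KAG by blast
  have ane: "\<alpha> \<noteq> \<one>\<^bsub>AG\<^esub>"
  proof
    assume "\<alpha> = \<one>\<^bsub>AG\<^esub>"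
    then have "card K dvd r" using AGG.pow_eq_id[OF thAG] ord_th unfolding \<alpha>_def by simp
    then show False using r rpos by (simp add: dvd_imp_le)
  qed
  have aa: "\<alpha> \<otimes>\<^bsub>AG\<^esub> \<alpha> = \<one>\<^bsub>AG\<^esub>"
    unfolding \<alpha>_def using AGG.nat_pow_mult[OF thAG, of r r] th_card r by (simp add: mult_2)
  obtain a where a: "\<alpha> q0 = q0 [^]\<^bsub>P\<^esub> (a::int)" using auto_carr[OF aA q0c] q0gen by blast
  have "\<alpha> (\<alpha> q0) = q0" using multAG[OF aA aA q0c] aa oneAG[OF q0c] by simp
  moreover have "\<alpha> (\<alpha> q0) = q0 [^]\<^bsub>P\<^esub> (a * a)"
    using a auto_ipow[OF aA q0c, of a] PG.int_pow_pow[OF q0c] by simp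
  ultimately have "q0 [^]\<^bsub>P\<^esub> (a * a) = q0 [^]\<^bsub>P\<^esub> (1::int)" using q0c by simp
  then have "int p dvd (1 - a * a)" using PG.int_pow_eq[OF q0c] ord_q0 by simp
  moreover have "1 - a * a = (1 - a) * (1 + a)" by (simp add: algebra_simps)
  moreover have ip: "Factorial_Ring.prime (int p)" using pprime by simp
  ultimately have "int p dvd (1 - a) \<or> int p dvd (1 + a)" using prime_dvd_mult_iff[OF ip] by metis
  then show ?thesis
  proof
    assume "int p dvd (1 - a)"
    then have "q0 [^]\<^bsub>P\<^esub> a = q0 [^]\<^bsub>P\<^esub> (1::int)" using PG.int_pow_eq[OF q0c] ord_q0 by simp
    then have "\<alpha> q0 = \<one>\<^bsub>AG\<^esub> q0" using a q0c oneAG by simp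
    then have "\<alpha> = \<one>\<^bsub>AG\<^esub>" using auto_eq[OF aA] AGG.one_closed carrAG by simp
    then show ?thesis using ane by simp
  next
    assume d: "int p dvd (1 + a)"
    have "-1 - a = -(1 + a)" by simp
    then have "int p dvd (-1 - a)" using d by (simp only: dvd_minus_iff)
    then have "q0 [^]\<^bsub>P\<^esub> a = q0 [^]\<^bsub>P\<^esub> (-1::int)" using PG.int_pow_eq[OF q0c] ord_q0
      by simp
    then have "\<alpha> q0 = INV q0" using a q0c INV_app PG.int_pow_neg[OF q0c, of 1] by simp
    then have "\<alpha> = INV" using auto_eq[OF aA INV_auto] by simp
    then show ?thesis using aK by simp
  qed
qed

end

lemma iso_transfer:
  assumes iso: "alg_isomorphic G S H T" and eS: "eS \<in> S" and uS: "unitB G S eS"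
    and uT: "\<forall>B\<in>T. unitB H T B \<longrightarrow> B = eT"
  shows "\<exists>f. bij_betw f S T \<and> f eS = eT \<and>
           (\<forall>U\<in>S. struct_const H (f U) (f U) eT = struct_const G U U eS)"
proof -
  obtain f where bij: "bij_betw f S T" and pres: "\<forall>B1\<in>S. \<forall>B2\<in>S. \<forall>B3\<in>S.
      struct_const H (f B1) (f B2) (f B3) = struct_const G B1 B2 B3"
    using iso unfolding alg_isomorphic_def by blast
  have feT: "f eS \<in> T" using bij eS bij_betwE by blast
  have "unitB H T (f eS)" unfolding unitB_def
  proof (intro ballI)
    fix Y Z assume Y: "Y \<in> T" and Z: "Z \<in> T"
    obtain Y' where Y': "Y' \<in> S" "Y = f Y'" using Y bij by (metis bij_betw_imp_surj_on imageE)
    obtain Z' where Z': "Z' \<in> S" "Z = f Z'" using Z bij by (metis bij_betw_imp_surj_on imageE)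
    have "(Y = Z) = (Y' = Z')" using Y' Z' bij by (metis bij_betw_imp_inj_on inj_onD)
    moreover have "struct_const H (f eS) Y Z = struct_const G eS Y' Z'" using pres eS Y' Z' by simp
    ultimately show "struct_const H (f eS) Y Z = (if Y = Z then 1 else 0)"
      using uS Y' Z' unfolding unitB_def by simp
  qed
  then have "f eS = eT" using uT feT by blast
  then show ?thesis using bij pres eS by auto
qed

definition Phi where "Phi G S e = (\<exists>U\<in>S. U \<noteq> e \<and> struct_const G U U e = 1)"
definition Psi where "Psi G S e = (\<forall>U\<in>S. struct_const G U U e \<noteq> 0)"

lemma not_iso:
  assumes eS: "eS \<in> S" and uS: "unitB G S eS"
    and uT: "\<forall>B\<in>T. unitB H T B \<longrightarrow> B = eT"
    and d: "Phi G S eS \<noteq> Phi H T eT \<or> Psi G S eS \<noteq> Psi H T eT"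
  shows "\<not> alg_isomorphic G S H T"
proof
  assume "alg_isomorphic G S H T"
  then obtain f where bij: "bij_betw f S T" and fe: "f eS = eT" and
    pr: "\<forall>U\<in>S. struct_const H (f U) (f U) eT = struct_const G U U eS"
    using iso_transfer[OF _ eS uS uT] by blast
  have surj: "T = f ` S" using bij by (simp add: bij_betw_def)
  have inj: "inj_on f S" using bij by (simp add: bij_betw_def)
  have "U \<in> S \<Longrightarrow> (f U = eT) = (U = eS)" for U using inj fe eS by (metis inj_onD)
  then have "Phi G S eS = Phi H T eT" unfolding Phi_def surj using pr by auto
  moreover have "Psi G S eS = Psi H T eT" unfolding Psi_def surj using pr by auto
  ultimately show False using d by simp
qed

lemma sc_one: "struct_const G U V {e} = card {(x, y). x \<in> U \<and> y \<in> V \<and> x \<otimes>\<^bsub>G\<^esub> y = e}"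
  by (simp add: struct_const_def)

lemma E1_sq: "x \<in> carrier E1 \<Longrightarrow> x \<otimes>\<^bsub>E1\<^esub> x = \<one>\<^bsub>E1\<^esub>"
  by (drule E1_cases) (elim disjE; simp add: E1_mult E1_one)

lemma E1_comm: "x \<otimes>\<^bsub>E1\<^esub> y = y \<otimes>\<^bsub>E1\<^esub> x"
  by (simp add: E1_mult add.commute)

lemma s1_fix: "x \<in> carrier E1 \<Longrightarrow> sigma1 x = x \<Longrightarrow> x = \<one>\<^bsub>E1\<^esub>"
  by (drule E1_cases) (elim disjE; simp add: sigma1_def E1_one)

locale ctxPM = ctxP + ctxM
begin

lemma ctxE1: "ctxE P K \<theta> M E1 sigma1"
  by (rule ctxE.intro[OF ctxM_axioms]) (rule ctxE_axioms.intro, auto simp: E1_grp E1_fin s1_carr s1_6 s1_one s1_inj1)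

lemma ctxE2: "ctxE P K \<theta> M E1 sigma2"
  by (rule ctxE.intro[OF ctxM_axioms]) (rule ctxE_axioms.intro, auto simp: E1_grp E1_fin s2_carr s2_6 s2_one s2_inj1)

lemma ctxE3: "ctxE P K \<theta> M E2 sigma3"
  by (rule ctxE.intro[OF ctxM_axioms]) (rule ctxE_axioms.intro, auto simp: E2_grp E2_fin s3_carr s3_6 s3_one s3_inj1)

lemma A1_noPhi: "\<not> Phi (E1 \<times>\<times> P) (SA E1 sigma1 P K \<theta> M) {\<one>\<^bsub>E1 \<times>\<times> P\<^esub>}"
proof
  interpret I: ctxE P K \<theta> M E1 sigma1 by (rule ctxE1)
  assume "Phi (E1 \<times>\<times> P) (SA E1 sigma1 P K \<theta> M) {\<one>\<^bsub>E1 \<times>\<times> P\<^esub>}"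
  then obtain U where U: "U \<in> SA E1 sigma1 P K \<theta> M" "U \<noteq> {\<one>\<^bsub>E1 \<times>\<times> P\<^esub>}"
    "struct_const (E1 \<times>\<times> P) U U {\<one>\<^bsub>E1 \<times>\<times> P\<^esub>} = 1" unfolding Phi_def by blast
  obtain g where g: "g \<in> carrier (E1 \<times>\<times> P)" "U = I.Orb g" using U(1) I.SA_eq by blast
  define Pairs where "Pairs = {(x, y). x \<in> U \<and> y \<in> U \<and> x \<otimes>\<^bsub>E1 \<times>\<times> P\<^esub> y = \<one>\<^bsub>E1 \<times>\<times> P\<^esub>}"
  have "card Pairs = 1" using U(3) unfolding sc_one Pairs_def .
  then obtain x0 y0 where P1: "Pairs = {(x0, y0)}" by (metis card_1_singletonE surj_pair)
  have x0U: "x0 \<in> U" and y0U: "y0 \<in> U" and xy: "x0 \<otimes>\<^bsub>E1 \<times>\<times> P\<^esub> y0 = \<one>\<^bsub>E1 \<times>\<times> P\<^esub>"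
    using P1 unfolding Pairs_def by blast+
  have x0c: "x0 \<in> carrier (E1 \<times>\<times> P)" and y0c: "y0 \<in> carrier (E1 \<times>\<times> P)"
    using x0U y0U g I.Orb_carr by blast+
  have "y0 \<otimes>\<^bsub>E1 \<times>\<times> P\<^esub> x0 = x0 \<otimes>\<^bsub>E1 \<times>\<times> P\<^esub> y0"
  proof -
    have "snd y0 \<otimes>\<^bsub>P\<^esub> snd x0 = snd x0 \<otimes>\<^bsub>P\<^esub> snd y0"
      using x0c y0c Pcomm[of "snd y0" "snd x0"] by (auto simp: mem_Times_iff)
    moreover have "fst y0 \<otimes>\<^bsub>E1\<^esub> fst x0 = fst x0 \<otimes>\<^bsub>E1\<^esub> fst y0" by (rule E1_comm)
    ultimately show ?thesis by (simp only: mult_DirProd')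
  qed
  then have "(y0, x0) \<in> Pairs" using xy x0U y0U unfolding Pairs_def by (simp only: mem_Collect_eq case_prod_conv simp_thms)
  then have yx: "y0 = x0" using P1 by blast
  obtain e1 r where x0e: "x0 = (e1, r)" by (cases x0)
  have e1c: "e1 \<in> carrier E1" and rc: "r \<in> carrier P" using x0c x0e by auto
  have "r \<otimes>\<^bsub>P\<^esub> r = \<one>\<^bsub>P\<^esub>" using xy yx x0e by simp
  then have r1: "r = \<one>\<^bsub>P\<^esub>" using sq1 rc by blast
  obtain k m where km: "m \<in> M" "x0 = I.act k m g" using x0U g unfolding I.Orb_def by blast
  have e1ne: "e1 \<noteq> \<one>\<^bsub>E1\<^esub>"
  proof
    assume "e1 = \<one>\<^bsub>E1\<^esub>"
    then have "\<one>\<^bsub>E1 \<times>\<times> P\<^esub> \<in> U" using x0U x0e r1 by simp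
    then have "g = \<one>\<^bsub>E1 \<times>\<times> P\<^esub>" using I.one_in_Orb g by blast
    then show False using U(2) g I.Orb_one by simp
  qed
  have mA: "m \<otimes>\<^bsub>AG\<^esub> (\<theta> [^]\<^bsub>AG\<^esub> k) \<in> auto P" using mpow_auto[OF km(1)] .
  have sg: "snd g \<in> carrier P" using g by (auto simp: mem_Times_iff)
  have "(m \<otimes>\<^bsub>AG\<^esub> (\<theta> [^]\<^bsub>AG\<^esub> k)) (snd g) = \<one>\<^bsub>P\<^esub>"
    using km(2) x0e r1 unfolding I.act_def by simp
  then have sg1: "snd g = \<one>\<^bsub>P\<^esub>" using auto_inj1[OF mA sg] by simp
  define x1 where "x1 = I.act (Suc k) m g"
  have x1U: "x1 \<in> U" unfolding x1_def g(2) I.Orb_def using km(1) by blast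
  have fx: "(sigma1 ^^ k) (fst g) = e1" using km(2) x0e unfolding I.act_def by simp
  have x1e: "x1 = (sigma1 e1, \<one>\<^bsub>P\<^esub>)"
    unfolding x1_def I.act_def using fx sg1 auto_one[OF mpow_auto[OF km(1)], of "Suc k"] by (simp del: nat_pow_Suc)
  have "x1 \<otimes>\<^bsub>E1 \<times>\<times> P\<^esub> x1 = \<one>\<^bsub>E1 \<times>\<times> P\<^esub>"
    unfolding x1e using E1_sq[OF s1_carr[OF e1c]] by simp
  then have "(x1, x1) \<in> Pairs" using x1U unfolding Pairs_def by simp
  then have "x1 = x0" using P1 by blast
  then have "sigma1 e1 = e1" using x1e x0e by simp
  then show False using s1_fix[OF e1c] e1ne by simp
qed

lemma A2_Phi: "Phi (E1 \<times>\<times> P) (SA E1 sigma2 P K \<theta> M) {\<one>\<^bsub>E1 \<times>\<times> P\<^esub>}"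
proof -
  interpret I: ctxE P K \<theta> M E1 sigma2 by (rule ctxE2)
  define t where "t = ((1::int, 1::int), \<one>\<^bsub>P\<^esub>)"
  have tc: "t \<in> carrier (E1 \<times>\<times> P)" unfolding t_def by (simp add: E1_carr)
  have "I.Orb t \<subseteq> {t}"
    unfolding I.Orb_def I.act_def t_def using s2_pow11 auto_one[OF mpow_auto] by auto
  then have Ot: "I.Orb t = {t}" using I.Orb_self[OF tc] by blast
  have UT: "{t} \<in> SA E1 sigma2 P K \<theta> M" using I.SA_eq tc Ot by (metis imageI)
  have tt: "t \<otimes>\<^bsub>E1 \<times>\<times> P\<^esub> t = \<one>\<^bsub>E1 \<times>\<times> P\<^esub>" unfolding t_def by (simp add: E1_mult E1_one)
  have "{(x, y). x \<in> {t} \<and> y \<in> {t} \<and> x \<otimes>\<^bsub>E1 \<times>\<times> P\<^esub> y = \<one>\<^bsub>E1 \<times>\<times> P\<^esub>} = {(t, t)}"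
    using tt by auto
  then have "struct_const (E1 \<times>\<times> P) {t} {t} {\<one>\<^bsub>E1 \<times>\<times> P\<^esub>} = 1" unfolding sc_one by simp
  moreover have "{t} \<noteq> {\<one>\<^bsub>E1 \<times>\<times> P\<^esub>}" unfolding t_def by (simp add: E1_one)
  ultimately show ?thesis unfolding Phi_def using UT by blast
qed

lemma A3_Phi: "Phi (E2 \<times>\<times> P) (SA E2 sigma3 P K \<theta> M) {\<one>\<^bsub>E2 \<times>\<times> P\<^esub>}"
proof -
  interpret I: ctxE P K \<theta> M E2 sigma3 by (rule ctxE3)
  define t where "t = (2::int, \<one>\<^bsub>P\<^esub>)"
  have tc: "t \<in> carrier (E2 \<times>\<times> P)" unfolding t_def by (simp add: E2_carr)
  have "I.Orb t \<subseteq> {t}"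
    unfolding I.Orb_def I.act_def t_def using s3_pow2 auto_one[OF mpow_auto] by auto
  then have Ot: "I.Orb t = {t}" using I.Orb_self[OF tc] by blast
  have UT: "{t} \<in> SA E2 sigma3 P K \<theta> M" using I.SA_eq tc Ot by (metis imageI)
  have tt: "t \<otimes>\<^bsub>E2 \<times>\<times> P\<^esub> t = \<one>\<^bsub>E2 \<times>\<times> P\<^esub>" unfolding t_def by (simp add: E2_mult E2_one)
  have "{(x, y). x \<in> {t} \<and> y \<in> {t} \<and> x \<otimes>\<^bsub>E2 \<times>\<times> P\<^esub> y = \<one>\<^bsub>E2 \<times>\<times> P\<^esub>} = {(t, t)}"
    using tt by auto
  then have "struct_const (E2 \<times>\<times> P) {t} {t} {\<one>\<^bsub>E2 \<times>\<times> P\<^esub>} = 1" unfolding sc_one by simp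
  moreover have "{t} \<noteq> {\<one>\<^bsub>E2 \<times>\<times> P\<^esub>}" unfolding t_def by (simp add: E2_one)
  ultimately show ?thesis unfolding Phi_def using UT by blast
qed

end

lemma E2_inv_sum: "x \<in> carrier E2 \<Longrightarrow> (x + sigma3 x) mod 4 = 0"
  by (drule E2_cases) (elim disjE; simp add: sigma3_def)

locale ctxI2 = ctxPM +
  assumes idx: "card K = 2 * card M"
begin

lemma finM: "finite M" using MK finK finite_subset by blast

lemma Mpos: "card M > 0" using finM subgroup.one_closed[OF subM] card_gt_0_iff by blast

lemma th_notM: "\<theta> \<notin> M"
proof
  assume "\<theta> \<in> M"
  then have "generate AG {\<theta>} \<subseteq> M" using AGG.generate_subgroup_incl[OF _ subM] by blast
  then have "K \<subseteq> M" using genK by simp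
  then have "card K \<le> card M" using finM card_mono by blast
  then show False using idx Mpos by simp
qed

lemma notM_coset: "y \<in> K \<Longrightarrow> y \<notin> M \<Longrightarrow> \<exists>m\<in>M. y = m \<otimes>\<^bsub>AG\<^esub> \<theta>"
proof -
  assume yK: "y \<in> K" and yM: "y \<notin> M"
  define C where "C = (\<lambda>m. m \<otimes>\<^bsub>AG\<^esub> \<theta>) ` M"
  have CK: "C \<subseteq> K" unfolding C_def using subgroup.m_closed[OF subK] MK thK by blast
  have inj: "inj_on (\<lambda>m. m \<otimes>\<^bsub>AG\<^esub> \<theta>) M"
    by (rule inj_onI) (use MG thAG AGG.r_cancel in blast)
  have cC: "card C = card M" unfolding C_def using card_image[OF inj] .
  have disj: "M \<inter> C = {}"
  proof (rule ccontr)
    assume "M \<inter> C \<noteq> {}"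
    then obtain m where m: "m \<in> M" "m \<otimes>\<^bsub>AG\<^esub> \<theta> \<in> M" unfolding C_def by blast
    have "inv\<^bsub>AG\<^esub> m \<otimes>\<^bsub>AG\<^esub> (m \<otimes>\<^bsub>AG\<^esub> \<theta>) = \<theta>"
      using MAG[OF m(1)] thAG by (simp add: AGG.m_assoc[symmetric])
    moreover have "inv\<^bsub>AG\<^esub> m \<otimes>\<^bsub>AG\<^esub> (m \<otimes>\<^bsub>AG\<^esub> \<theta>) \<in> M"
      using subgroup.m_closed[OF subM subgroup.m_inv_closed[OF subM m(1)] m(2)] .
    ultimately show False using th_notM by simp
  qed
  have "card (M \<union> C) = card K" using card_Un_disjoint[OF finM _ disj] finite_subset[OF CK finK] cC idx by simp
  then have "M \<union> C = K" using card_subset_eq[OF finK] CK MK by blast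
  then have "y \<in> C" using yK yM by blast
  then show ?thesis unfolding C_def by blast
qed

lemma inv_par: "y \<in> K \<Longrightarrow> (inv\<^bsub>AG\<^esub> y \<in> M) = (y \<in> M)"
  using subgroup.m_inv_closed[OF subM] AGG.inv_inv KG by (metis subsetD)

lemma par: "y \<in> K \<Longrightarrow> z \<in> K \<Longrightarrow> (y \<otimes>\<^bsub>AG\<^esub> z \<in> M) = (y \<in> M \<longleftrightarrow> z \<in> M)"
proof -
  assume yK: "y \<in> K" and zK: "z \<in> K"
  have yc: "y \<in> carrier AG" and zc: "z \<in> carrier AG" using yK zK KG by auto
  show ?thesis
  proof (cases "y \<in> M")
    case yM: True
    show ?thesis
    proof (cases "z \<in> M")
      case True then show ?thesis using yM subgroup.m_closed[OF subM] by simp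
    next
      case False
      have "y \<otimes>\<^bsub>AG\<^esub> z \<notin> M"
      proof
        assume "y \<otimes>\<^bsub>AG\<^esub> z \<in> M"
        then have "inv\<^bsub>AG\<^esub> y \<otimes>\<^bsub>AG\<^esub> (y \<otimes>\<^bsub>AG\<^esub> z) \<in> M"
          using subgroup.m_closed[OF subM subgroup.m_inv_closed[OF subM yM]] by blast
        then show False using False yc zc by (simp add: AGG.m_assoc[symmetric])
      qed
      then show ?thesis using yM False by simp
    qed
  next
    case yM: False
    show ?thesis
    proof (cases "z \<in> M")
      case True
      have "y \<otimes>\<^bsub>AG\<^esub> z \<notin> M"
      proof
        assume "y \<otimes>\<^bsub>AG\<^esub> z \<in> M"
        then have "(y \<otimes>\<^bsub>AG\<^esub> z) \<otimes>\<^bsub>AG\<^esub> inv\<^bsub>AG\<^esub> z \<in> M"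
          using subgroup.m_closed[OF subM _ subgroup.m_inv_closed[OF subM True]] by blast
        then show False using yM yc zc by (simp add: AGG.m_assoc)
      qed
      then show ?thesis using yM True by simp
    next
      case False
      obtain m where m: "m \<in> M" "y = m \<otimes>\<^bsub>AG\<^esub> \<theta>" using notM_coset yK yM by blast
      obtain m' where m': "m' \<in> M" "z = m' \<otimes>\<^bsub>AG\<^esub> \<theta>" using notM_coset zK False by blast
      have t1: "\<theta> [^]\<^bsub>AG\<^esub> (1::nat) = \<theta>" using thAG by simp
      have "y \<otimes>\<^bsub>AG\<^esub> z = (m \<otimes>\<^bsub>AG\<^esub> m') \<otimes>\<^bsub>AG\<^esub> (\<theta> [^]\<^bsub>AG\<^esub> (1 + 1::nat))"
        using mpow_comp[OF m'(1) m(1), of 1 1] m m' t1 by simp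
      moreover have "\<theta> [^]\<^bsub>AG\<^esub> (1 + 1::nat) \<in> M"
      proof (rule ccontr)
        assume nM: "\<theta> [^]\<^bsub>AG\<^esub> (1 + 1::nat) \<notin> M"
        obtain m2 where m2: "m2 \<in> M" "\<theta> [^]\<^bsub>AG\<^esub> (1 + 1::nat) = m2 \<otimes>\<^bsub>AG\<^esub> \<theta>"
          using notM_coset[OF pow_K nM] by blast
        have "\<theta> [^]\<^bsub>AG\<^esub> (1 + 1::nat) = \<theta> \<otimes>\<^bsub>AG\<^esub> \<theta>" using thAG by simp
        then have "\<theta> \<otimes>\<^bsub>AG\<^esub> \<theta> = m2 \<otimes>\<^bsub>AG\<^esub> \<theta>" using m2(2) by simp
        then have "\<theta> = m2" using AGG.r_cancel thAG MAG[OF m2(1)] by blast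
        then show False using m2 th_notM by simp
      qed
      ultimately show ?thesis using yM False subgroup.m_closed[OF subM subgroup.m_closed[OF subM m(1) m'(1)]] by simp
    qed
  qed
qed

lemma pow_par: "(\<theta> [^]\<^bsub>AG\<^esub> (k::nat) \<in> M) = even k"
proof (induction k)
  case 0 then show ?case using subgroup.one_closed[OF subM] by simp
next
  case (Suc k)
  have "\<theta> [^]\<^bsub>AG\<^esub> Suc k = \<theta> [^]\<^bsub>AG\<^esub> k \<otimes>\<^bsub>AG\<^esub> \<theta>" by simp
  then have "(\<theta> [^]\<^bsub>AG\<^esub> Suc k \<in> M) = (\<theta> [^]\<^bsub>AG\<^esub> k \<in> M \<longleftrightarrow> \<theta> \<in> M)"
    using par[OF pow_K thK] by simp
  then show ?case using Suc th_notM by simp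
qed

lemma mpow_par: "m \<in> M \<Longrightarrow> (m \<otimes>\<^bsub>AG\<^esub> (\<theta> [^]\<^bsub>AG\<^esub> (k::nat)) \<in> M) = even k"
  using par[OF _ pow_K, of m k] MK pow_par by auto

end

lemma E1_par: "((sigma2 ^^ k) (1,0)) \<otimes>\<^bsub>E1\<^esub> ((sigma2 ^^ j) (1,0)) = \<one>\<^bsub>E1\<^esub> \<Longrightarrow> even k = even j"
  by (cases "even k"; cases "even j") (simp_all add: s2_pow E1_mult E1_one)

lemma E2_par: "((sigma3 ^^ k) 1) \<otimes>\<^bsub>E2\<^esub> ((sigma3 ^^ j) 1) = \<one>\<^bsub>E2\<^esub> \<Longrightarrow> even k \<noteq> even j"
  by (cases "even k"; cases "even j") (simp_all add: s3_pow E2_mult E2_one)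

context ctxI2
begin

lemma INV_AG: "INV \<in> carrier AG" using INV_auto carrAG by simp

lemma key: "u \<in> K \<Longrightarrow> w \<in> K \<Longrightarrow> u q0 \<otimes>\<^bsub>P\<^esub> w q0 = \<one>\<^bsub>P\<^esub> \<Longrightarrow> (INV \<in> M) = (u \<in> M \<longleftrightarrow> w \<in> M)"
proof -
  assume uK: "u \<in> K" and wK: "w \<in> K" and e: "u q0 \<otimes>\<^bsub>P\<^esub> w q0 = \<one>\<^bsub>P\<^esub>"
  have uA: "u \<in> auto P" and wA: "w \<in> auto P" using uK wK KAG by auto
  have uc: "u \<in> carrier AG" and wc: "w \<in> carrier AG" using uK wK KG by auto
  have "inv\<^bsub>P\<^esub> (w q0) = u q0" using PG.inv_equality[OF e auto_carr[OF wA q0c] auto_carr[OF uA q0c]] .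
  then have "u q0 = (INV \<otimes>\<^bsub>AG\<^esub> w) q0" using multAG[OF INV_auto wA q0c] INV_app auto_carr[OF wA q0c] by simp
  moreover have "INV \<otimes>\<^bsub>AG\<^esub> w \<in> auto P" using AGG.m_closed[OF INV_AG wc] carrAG by simp
  ultimately have u: "u = INV \<otimes>\<^bsub>AG\<^esub> w" using auto_eq[OF uA] by simp
  have "u \<otimes>\<^bsub>AG\<^esub> inv\<^bsub>AG\<^esub> w = INV" unfolding u using INV_AG wc by (simp add: AGG.m_assoc)
  moreover have "inv\<^bsub>AG\<^esub> w \<in> K" using subgroup.m_inv_closed[OF subK wK] .
  ultimately have "(INV \<in> M) = (u \<in> M \<longleftrightarrow> inv\<^bsub>AG\<^esub> w \<in> M)" using par[OF uK] by metis
  then show ?thesis using inv_par[OF wK] by simp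
qed

lemma A2_Psi: "Psi (E1 \<times>\<times> P) (SA E1 sigma2 P K \<theta> M) {\<one>\<^bsub>E1 \<times>\<times> P\<^esub>} = (INV \<in> M)"
proof
  interpret I: ctxE P K \<theta> M E1 sigma2 by (rule ctxE2)
  assume ps: "Psi (E1 \<times>\<times> P) (SA E1 sigma2 P K \<theta> M) {\<one>\<^bsub>E1 \<times>\<times> P\<^esub>}"
  define g where "g = ((1::int, 0::int), q0)"
  have gc: "g \<in> carrier (E1 \<times>\<times> P)" unfolding g_def using q0c by (simp add: E1_carr)
  have "I.Orb g \<in> SA E1 sigma2 P K \<theta> M" using I.SA_eq gc by simp
  then have "struct_const (E1 \<times>\<times> P) (I.Orb g) (I.Orb g) {\<one>\<^bsub>E1 \<times>\<times> P\<^esub>} \<noteq> 0" using ps unfolding Psi_def by blast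
  then have "{(x, y). x \<in> I.Orb g \<and> y \<in> I.Orb g \<and> x \<otimes>\<^bsub>E1 \<times>\<times> P\<^esub> y = \<one>\<^bsub>E1 \<times>\<times> P\<^esub>} \<noteq> {}"
    unfolding sc_one by (metis card.empty)
  then obtain x y where xy: "x \<in> I.Orb g" "y \<in> I.Orb g" "x \<otimes>\<^bsub>E1 \<times>\<times> P\<^esub> y = \<one>\<^bsub>E1 \<times>\<times> P\<^esub>" by blast
  obtain k m where km: "m \<in> M" "x = I.act k m g" using xy(1) unfolding I.Orb_def by blast
  obtain j m' where jm: "m' \<in> M" "y = I.act j m' g" using xy(2) unfolding I.Orb_def by blast
  have "((sigma2 ^^ k) (1,0)) \<otimes>\<^bsub>E1\<^esub> ((sigma2 ^^ j) (1,0)) = \<one>\<^bsub>E1\<^esub>"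
    using xy(3) km(2) jm(2) unfolding I.act_def g_def by simp
  then have par: "even k = even j" by (rule E1_par)
  have "(m \<otimes>\<^bsub>AG\<^esub> (\<theta> [^]\<^bsub>AG\<^esub> k)) q0 \<otimes>\<^bsub>P\<^esub> (m' \<otimes>\<^bsub>AG\<^esub> (\<theta> [^]\<^bsub>AG\<^esub> j)) q0 = \<one>\<^bsub>P\<^esub>"
    using xy(3) km(2) jm(2) unfolding I.act_def g_def by simp
  then have "(INV \<in> M) = (even k \<longleftrightarrow> even j)"
    using key[OF mpow_K[OF km(1)] mpow_K[OF jm(1)]] mpow_par[OF km(1)] mpow_par[OF jm(1)] by simp
  then show "INV \<in> M" using par by simp
next
  interpret I: ctxE P K \<theta> M E1 sigma2 by (rule ctxE2)
  assume IM: "INV \<in> M"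
  show "Psi (E1 \<times>\<times> P) (SA E1 sigma2 P K \<theta> M) {\<one>\<^bsub>E1 \<times>\<times> P\<^esub>}" unfolding Psi_def
  proof
    fix U assume "U \<in> SA E1 sigma2 P K \<theta> M"
    then obtain g where g: "g \<in> carrier (E1 \<times>\<times> P)" "U = I.Orb g" using I.SA_eq by blast
    have f1: "fst g \<in> carrier E1" and s1: "snd g \<in> carrier P" using g by (auto simp: mem_Times_iff)
    define y where "y = I.act 0 INV g"
    have yU: "y \<in> U" unfolding y_def g(2) I.Orb_def using IM by blast
    have "y = (fst g, inv\<^bsub>P\<^esub> (snd g))" unfolding y_def I.act_def using INV_AG s1 INV_app by simp
    then have "g \<otimes>\<^bsub>E1 \<times>\<times> P\<^esub> y = \<one>\<^bsub>E1 \<times>\<times> P\<^esub>" using E1_sq[OF f1] s1 by (simp add: mult_DirProd')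
    then have ne: "(g, y) \<in> {(x, y). x \<in> U \<and> y \<in> U \<and> x \<otimes>\<^bsub>E1 \<times>\<times> P\<^esub> y = \<one>\<^bsub>E1 \<times>\<times> P\<^esub>}"
      using yU I.Orb_self[OF g(1)] g(2) by simp
    have "{(x, y). x \<in> U \<and> y \<in> U \<and> x \<otimes>\<^bsub>E1 \<times>\<times> P\<^esub> y = \<one>\<^bsub>E1 \<times>\<times> P\<^esub>} \<subseteq> U \<times> U"
      by blast
    moreover have "finite (U \<times> U)" using g I.Orb_carr I.finG finite_subset by blast
    ultimately have fin: "finite {(x, y). x \<in> U \<and> y \<in> U \<and> x \<otimes>\<^bsub>E1 \<times>\<times> P\<^esub> y = \<one>\<^bsub>E1 \<times>\<times> P\<^esub>}"
      using finite_subset by blast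
    have "card {(x, y). x \<in> U \<and> y \<in> U \<and> x \<otimes>\<^bsub>E1 \<times>\<times> P\<^esub> y = \<one>\<^bsub>E1 \<times>\<times> P\<^esub>} > 0"
      using fin ne unfolding card_gt_0_iff by blast
    then show "struct_const (E1 \<times>\<times> P) U U {\<one>\<^bsub>E1 \<times>\<times> P\<^esub>} \<noteq> 0"
      unfolding sc_one by linarith
  qed
qed

lemma A3_Psi: "INV \<in> K \<Longrightarrow> Psi (E2 \<times>\<times> P) (SA E2 sigma3 P K \<theta> M) {\<one>\<^bsub>E2 \<times>\<times> P\<^esub>} = (INV \<notin> M)"
proof
  interpret I: ctxE P K \<theta> M E2 sigma3 by (rule ctxE3)
  assume ps: "Psi (E2 \<times>\<times> P) (SA E2 sigma3 P K \<theta> M) {\<one>\<^bsub>E2 \<times>\<times> P\<^esub>}"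
  define g where "g = (1::int, q0)"
  have gc: "g \<in> carrier (E2 \<times>\<times> P)" unfolding g_def using q0c by (simp add: E2_carr)
  have "I.Orb g \<in> SA E2 sigma3 P K \<theta> M" using I.SA_eq gc by simp
  then have "struct_const (E2 \<times>\<times> P) (I.Orb g) (I.Orb g) {\<one>\<^bsub>E2 \<times>\<times> P\<^esub>} \<noteq> 0" using ps unfolding Psi_def by blast
  then have "{(x, y). x \<in> I.Orb g \<and> y \<in> I.Orb g \<and> x \<otimes>\<^bsub>E2 \<times>\<times> P\<^esub> y = \<one>\<^bsub>E2 \<times>\<times> P\<^esub>} \<noteq> {}"
    unfolding sc_one by (metis card.empty)
  then obtain x y where xy: "x \<in> I.Orb g" "y \<in> I.Orb g" "x \<otimes>\<^bsub>E2 \<times>\<times> P\<^esub> y = \<one>\<^bsub>E2 \<times>\<times> P\<^esub>" by blast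
  obtain k m where km: "m \<in> M" "x = I.act k m g" using xy(1) unfolding I.Orb_def by blast
  obtain j m' where jm: "m' \<in> M" "y = I.act j m' g" using xy(2) unfolding I.Orb_def by blast
  have "((sigma3 ^^ k) 1) \<otimes>\<^bsub>E2\<^esub> ((sigma3 ^^ j) 1) = \<one>\<^bsub>E2\<^esub>"
    using xy(3) km(2) jm(2) unfolding I.act_def g_def by simp
  then have par: "even k \<noteq> even j" by (rule E2_par)
  have "(m \<otimes>\<^bsub>AG\<^esub> (\<theta> [^]\<^bsub>AG\<^esub> k)) q0 \<otimes>\<^bsub>P\<^esub> (m' \<otimes>\<^bsub>AG\<^esub> (\<theta> [^]\<^bsub>AG\<^esub> j)) q0 = \<one>\<^bsub>P\<^esub>"
    using xy(3) km(2) jm(2) unfolding I.act_def g_def by simp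
  then have "(INV \<in> M) = (even k \<longleftrightarrow> even j)"
    using key[OF mpow_K[OF km(1)] mpow_K[OF jm(1)]] mpow_par[OF km(1)] mpow_par[OF jm(1)] by simp
  then show "INV \<notin> M" using par by simp
next
  interpret I: ctxE P K \<theta> M E2 sigma3 by (rule ctxE3)
  assume IK: "INV \<in> K" and IM: "INV \<notin> M"
  obtain m where m: "m \<in> M" "INV = m \<otimes>\<^bsub>AG\<^esub> \<theta>" using notM_coset[OF IK IM] by blast
  have m1: "m \<otimes>\<^bsub>AG\<^esub> (\<theta> [^]\<^bsub>AG\<^esub> (1::nat)) = INV" using m thAG by simp
  show "Psi (E2 \<times>\<times> P) (SA E2 sigma3 P K \<theta> M) {\<one>\<^bsub>E2 \<times>\<times> P\<^esub>}" unfolding Psi_def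
  proof
    fix U assume "U \<in> SA E2 sigma3 P K \<theta> M"
    then obtain g where g: "g \<in> carrier (E2 \<times>\<times> P)" "U = I.Orb g" using I.SA_eq by blast
    have f1: "fst g \<in> carrier E2" and s1: "snd g \<in> carrier P" using g by (auto simp: mem_Times_iff)
    define y where "y = I.act 1 m g"
    have yU: "y \<in> U" unfolding y_def g(2) I.Orb_def using m(1) by blast
    have "y = (sigma3 (fst g), inv\<^bsub>P\<^esub> (snd g))" unfolding y_def I.act_def
      using m1 s1 INV_app by (simp del: nat_pow_Suc)
    then have "g \<otimes>\<^bsub>E2 \<times>\<times> P\<^esub> y = \<one>\<^bsub>E2 \<times>\<times> P\<^esub>" using E2_inv_sum[OF f1] s1
      by (simp add: mult_DirProd' E2_mult E2_one)
    then have ne: "(g, y) \<in> {(x, y). x \<in> U \<and> y \<in> U \<and> x \<otimes>\<^bsub>E2 \<times>\<times> P\<^esub> y = \<one>\<^bsub>E2 \<times>\<times> P\<^esub>}"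
      using yU I.Orb_self[OF g(1)] g(2) by simp
    have "{(x, y). x \<in> U \<and> y \<in> U \<and> x \<otimes>\<^bsub>E2 \<times>\<times> P\<^esub> y = \<one>\<^bsub>E2 \<times>\<times> P\<^esub>} \<subseteq> U \<times> U"
      by blast
    moreover have "finite (U \<times> U)" using g I.Orb_carr I.finG finite_subset by blast
    ultimately have fin: "finite {(x, y). x \<in> U \<and> y \<in> U \<and> x \<otimes>\<^bsub>E2 \<times>\<times> P\<^esub> y = \<one>\<^bsub>E2 \<times>\<times> P\<^esub>}"
      using finite_subset by blast
    have "card {(x, y). x \<in> U \<and> y \<in> U \<and> x \<otimes>\<^bsub>E2 \<times>\<times> P\<^esub> y = \<one>\<^bsub>E2 \<times>\<times> P\<^esub>} > 0"
      using fin ne unfolding card_gt_0_iff by blast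
    then show "struct_const (E2 \<times>\<times> P) U U {\<one>\<^bsub>E2 \<times>\<times> P\<^esub>} \<noteq> 0"
      unfolding sc_one by linarith
  qed
qed

end

lemma unit_facts:
  assumes "ctxE P K \<theta> M E \<sigma>"
  shows "{\<one>\<^bsub>E \<times>\<times> P\<^esub>} \<in> SA E \<sigma> P K \<theta> M \<and> unitB (E \<times>\<times> P) (SA E \<sigma> P K \<theta> M) {\<one>\<^bsub>E \<times>\<times> P\<^esub>}
    \<and> (\<forall>B\<in>SA E \<sigma> P K \<theta> M. unitB (E \<times>\<times> P) (SA E \<sigma> P K \<theta> M) B \<longrightarrow> B = {\<one>\<^bsub>E \<times>\<times> P\<^esub>})"
  using ctxE.SA_one_in[OF assms] ctxE.SA_unit[OF assms] ctxE.SA_unit_uniq[OF assms] by blast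

theorem lemma3p5:
  fixes p :: nat and P :: "('p, 'z) monoid_scheme"
    and K :: "('p \<Rightarrow> 'p) set" and \<theta> :: "'p \<Rightarrow> 'p"
    and M1 M2 M3 :: "('p \<Rightarrow> 'p) set"
  assumes "Factorial_Ring.prime p" and "p \<ge> 3"
    and "group P" and "cyclic_group P" and "order P = p"
    and "subgroup K (AutoGroup P)"
    and "\<theta> \<in> K" and "generate (AutoGroup P) {\<theta>} = K"
    and "3 dvd card K \<Longrightarrow> index_subgroup P K M1 3"
    and "2 dvd card K \<Longrightarrow> index_subgroup P K M2 2"
    and "2 dvd card K \<Longrightarrow> index_subgroup P K M3 2"
  shows
    "(3 dvd card K \<and> 2 dvd card K \<longrightarrow>
        \<not> alg_isomorphic (E1 \<times>\<times> P) (SA E1 sigma1 P K \<theta> M1) (E1 \<times>\<times> P) (SA E1 sigma2 P K \<theta> M2)) \<and>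
     (3 dvd card K \<and> 2 dvd card K \<longrightarrow>
        \<not> alg_isomorphic (E1 \<times>\<times> P) (SA E1 sigma1 P K \<theta> M1) (E2 \<times>\<times> P) (SA E2 sigma3 P K \<theta> M3)) \<and>
     (2 dvd card K \<and> 3 dvd card K \<longrightarrow>
        \<not> alg_isomorphic (E1 \<times>\<times> P) (SA E1 sigma2 P K \<theta> M2) (E1 \<times>\<times> P) (SA E1 sigma1 P K \<theta> M1)) \<and>
     (2 dvd card K \<longrightarrow>
        \<not> alg_isomorphic (E1 \<times>\<times> P) (SA E1 sigma2 P K \<theta> M2) (E2 \<times>\<times> P) (SA E2 sigma3 P K \<theta> M3)) \<and>
     (2 dvd card K \<and> 3 dvd card K \<longrightarrow>
        \<not> alg_isomorphic (E2 \<times>\<times> P) (SA E2 sigma3 P K \<theta> M3) (E1 \<times>\<times> P) (SA E1 sigma1 P K \<theta> M1)) \<and>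
     (2 dvd card K \<longrightarrow>
        \<not> alg_isomorphic (E2 \<times>\<times> P) (SA E2 sigma3 P K \<theta> M3) (E1 \<times>\<times> P) (SA E1 sigma2 P K \<theta> M2))"
proof -
  note a = assms
  have cardP: "card (carrier P) = p" using a(5) by (simp add: order_def)
  have finP: "finite (carrier P)" by (rule card_ge_0_finite) (use cardP a(2) in simp)
  obtain q0 where q0: "q0 \<in> carrier P" "carrier P = range (\<lambda>n::int. q0 [^]\<^bsub>P\<^esub> n)"
    using group.cyclic_group[OF a(3)] a(4) by blast
  have cP: "ctxP P K \<theta> p q0"
    unfolding ctxP_def ctxP_axioms_def ctx_def using a(1,2,3,6,7,8) finP cardP q0 by blast
  have cc: "ctx P K \<theta>" using cP by (rule ctxP.axioms(1))
  have S1: "ctxPM P K \<theta> p q0 M1" if "3 dvd card K"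
  proof -
    have "index_subgroup P K M1 3" using a(9) that .
    then have "subgroup M1 (AutoGroup P)" "M1 \<subseteq> K" unfolding index_subgroup_def by auto
    then show ?thesis unfolding ctxPM_def ctxM_def ctxM_axioms_def using cP cc by blast
  qed
  have S2: "ctxI2 P K \<theta> p q0 M2" if "2 dvd card K"
  proof -
    have "index_subgroup P K M2 2" using a(10) that .
    then have "subgroup M2 (AutoGroup P)" "M2 \<subseteq> K" "card K = 2 * card M2" unfolding index_subgroup_def by auto
    then show ?thesis unfolding ctxI2_def ctxI2_axioms_def ctxPM_def ctxM_def ctxM_axioms_def using cP cc by blast
  qed
  have S3: "ctxI2 P K \<theta> p q0 M3" if "2 dvd card K"
  proof -
    have "index_subgroup P K M3 2" using a(11) that .
    then have "subgroup M3 (AutoGroup P)" "M3 \<subseteq> K" "card K = 2 * card M3" unfolding index_subgroup_def by auto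
    then show ?thesis unfolding ctxI2_def ctxI2_axioms_def ctxPM_def ctxM_def ctxM_axioms_def using cP cc by blast
  qed
  have U1: "{\<one>\<^bsub>E1 \<times>\<times> P\<^esub>} \<in> SA E1 sigma1 P K \<theta> M1 \<and> unitB (E1 \<times>\<times> P) (SA E1 sigma1 P K \<theta> M1) {\<one>\<^bsub>E1 \<times>\<times> P\<^esub>}
    \<and> (\<forall>B\<in>SA E1 sigma1 P K \<theta> M1. unitB (E1 \<times>\<times> P) (SA E1 sigma1 P K \<theta> M1) B \<longrightarrow> B = {\<one>\<^bsub>E1 \<times>\<times> P\<^esub>})"
    and Ph1: "\<not> Phi (E1 \<times>\<times> P) (SA E1 sigma1 P K \<theta> M1) {\<one>\<^bsub>E1 \<times>\<times> P\<^esub>}"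
    if "3 dvd card K"
  proof -
    interpret J: ctxPM P K \<theta> p q0 M1 using S1[OF that] .
    show "{\<one>\<^bsub>E1 \<times>\<times> P\<^esub>} \<in> SA E1 sigma1 P K \<theta> M1 \<and> unitB (E1 \<times>\<times> P) (SA E1 sigma1 P K \<theta> M1) {\<one>\<^bsub>E1 \<times>\<times> P\<^esub>}
    \<and> (\<forall>B\<in>SA E1 sigma1 P K \<theta> M1. unitB (E1 \<times>\<times> P) (SA E1 sigma1 P K \<theta> M1) B \<longrightarrow> B = {\<one>\<^bsub>E1 \<times>\<times> P\<^esub>})"
      using unit_facts[OF J.ctxE1] .
    show "\<not> Phi (E1 \<times>\<times> P) (SA E1 sigma1 P K \<theta> M1) {\<one>\<^bsub>E1 \<times>\<times> P\<^esub>}" using J.A1_noPhi .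
  qed
  have U2: "{\<one>\<^bsub>E1 \<times>\<times> P\<^esub>} \<in> SA E1 sigma2 P K \<theta> M2 \<and> unitB (E1 \<times>\<times> P) (SA E1 sigma2 P K \<theta> M2) {\<one>\<^bsub>E1 \<times>\<times> P\<^esub>}
    \<and> (\<forall>B\<in>SA E1 sigma2 P K \<theta> M2. unitB (E1 \<times>\<times> P) (SA E1 sigma2 P K \<theta> M2) B \<longrightarrow> B = {\<one>\<^bsub>E1 \<times>\<times> P\<^esub>})"
    and Ph2: "Phi (E1 \<times>\<times> P) (SA E1 sigma2 P K \<theta> M2) {\<one>\<^bsub>E1 \<times>\<times> P\<^esub>}"
    and Ps2: "Psi (E1 \<times>\<times> P) (SA E1 sigma2 P K \<theta> M2) {\<one>\<^bsub>E1 \<times>\<times> P\<^esub>} = (ctxP.INV P \<in> M2)"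
    if "2 dvd card K"
  proof -
    interpret J: ctxI2 P K \<theta> p q0 M2 using S2[OF that] .
    show "{\<one>\<^bsub>E1 \<times>\<times> P\<^esub>} \<in> SA E1 sigma2 P K \<theta> M2 \<and> unitB (E1 \<times>\<times> P) (SA E1 sigma2 P K \<theta> M2) {\<one>\<^bsub>E1 \<times>\<times> P\<^esub>}
    \<and> (\<forall>B\<in>SA E1 sigma2 P K \<theta> M2. unitB (E1 \<times>\<times> P) (SA E1 sigma2 P K \<theta> M2) B \<longrightarrow> B = {\<one>\<^bsub>E1 \<times>\<times> P\<^esub>})"
      using unit_facts[OF J.ctxE2] .
    show "Phi (E1 \<times>\<times> P) (SA E1 sigma2 P K \<theta> M2) {\<one>\<^bsub>E1 \<times>\<times> P\<^esub>}" using J.A2_Phi .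
    show "Psi (E1 \<times>\<times> P) (SA E1 sigma2 P K \<theta> M2) {\<one>\<^bsub>E1 \<times>\<times> P\<^esub>} = (ctxP.INV P \<in> M2)" using J.A2_Psi .
  qed
  have U3: "{\<one>\<^bsub>E2 \<times>\<times> P\<^esub>} \<in> SA E2 sigma3 P K \<theta> M3 \<and> unitB (E2 \<times>\<times> P) (SA E2 sigma3 P K \<theta> M3) {\<one>\<^bsub>E2 \<times>\<times> P\<^esub>}
    \<and> (\<forall>B\<in>SA E2 sigma3 P K \<theta> M3. unitB (E2 \<times>\<times> P) (SA E2 sigma3 P K \<theta> M3) B \<longrightarrow> B = {\<one>\<^bsub>E2 \<times>\<times> P\<^esub>})"
    and Ph3: "Phi (E2 \<times>\<times> P) (SA E2 sigma3 P K \<theta> M3) {\<one>\<^bsub>E2 \<times>\<times> P\<^esub>}"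
    and Ps3: "Psi (E2 \<times>\<times> P) (SA E2 sigma3 P K \<theta> M3) {\<one>\<^bsub>E2 \<times>\<times> P\<^esub>} = (ctxP.INV P \<notin> M3)"
    if "2 dvd card K"
  proof -
    interpret J: ctxI2 P K \<theta> p q0 M3 using S3[OF that] .
    show "{\<one>\<^bsub>E2 \<times>\<times> P\<^esub>} \<in> SA E2 sigma3 P K \<theta> M3 \<and> unitB (E2 \<times>\<times> P) (SA E2 sigma3 P K \<theta> M3) {\<one>\<^bsub>E2 \<times>\<times> P\<^esub>}
    \<and> (\<forall>B\<in>SA E2 sigma3 P K \<theta> M3. unitB (E2 \<times>\<times> P) (SA E2 sigma3 P K \<theta> M3) B \<longrightarrow> B = {\<one>\<^bsub>E2 \<times>\<times> P\<^esub>})"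
      using unit_facts[OF J.ctxE3] .
    show "Phi (E2 \<times>\<times> P) (SA E2 sigma3 P K \<theta> M3) {\<one>\<^bsub>E2 \<times>\<times> P\<^esub>}" using J.A3_Phi .
    show "Psi (E2 \<times>\<times> P) (SA E2 sigma3 P K \<theta> M3) {\<one>\<^bsub>E2 \<times>\<times> P\<^esub>} = (ctxP.INV P \<notin> M3)"
      using J.A3_Psi J.INV_K that by simp
  qed
  have M23: "(ctxP.INV P \<in> M2) = (ctxP.INV P \<in> M3)" if "2 dvd card K"
  proof -
    interpret J2: ctxI2 P K \<theta> p q0 M2 using S2[OF that] .
    interpret J3: ctxI2 P K \<theta> p q0 M3 using S3[OF that] .
    have "ctxP.INV P \<in> K" using J2.INV_K that by simp
    then obtain j where j: "ctxP.INV P = \<theta> [^]\<^bsub>AutoGroup P\<^esub> (j::nat)" using J2.K_pows by blast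
    show ?thesis unfolding j using J2.pow_par J3.pow_par by simp
  qed
  show ?thesis
  proof (intro conjI impI)
    assume h: "3 dvd card K \<and> 2 dvd card K"
    then have h3: "3 dvd card K" and h2: "2 dvd card K" by auto
    show "\<not> alg_isomorphic (E1 \<times>\<times> P) (SA E1 sigma1 P K \<theta> M1) (E1 \<times>\<times> P) (SA E1 sigma2 P K \<theta> M2)"
      by (rule not_iso) (use U1[OF h3] Ph1[OF h3] U2[OF h2] Ph2[OF h2] in blast)+
  next
    assume h: "3 dvd card K \<and> 2 dvd card K"
    then have h3: "3 dvd card K" and h2: "2 dvd card K" by auto
    show "\<not> alg_isomorphic (E1 \<times>\<times> P) (SA E1 sigma1 P K \<theta> M1) (E2 \<times>\<times> P) (SA E2 sigma3 P K \<theta> M3)"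
      by (rule not_iso) (use U1[OF h3] Ph1[OF h3] U3[OF h2] Ph3[OF h2] in blast)+
  next
    assume h: "2 dvd card K \<and> 3 dvd card K"
    then have h3: "3 dvd card K" and h2: "2 dvd card K" by auto
    show "\<not> alg_isomorphic (E1 \<times>\<times> P) (SA E1 sigma2 P K \<theta> M2) (E1 \<times>\<times> P) (SA E1 sigma1 P K \<theta> M1)"
      by (rule not_iso) (use U1[OF h3] Ph1[OF h3] U2[OF h2] Ph2[OF h2] in blast)+
  next
    assume h2: "2 dvd card K"
    show "\<not> alg_isomorphic (E1 \<times>\<times> P) (SA E1 sigma2 P K \<theta> M2) (E2 \<times>\<times> P) (SA E2 sigma3 P K \<theta> M3)"
      by (rule not_iso) (use U2[OF h2] Ps2[OF h2] U3[OF h2] Ps3[OF h2] M23[OF h2] in blast)+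
  next
    assume h: "2 dvd card K \<and> 3 dvd card K"
    then have h3: "3 dvd card K" and h2: "2 dvd card K" by auto
    show "\<not> alg_isomorphic (E2 \<times>\<times> P) (SA E2 sigma3 P K \<theta> M3) (E1 \<times>\<times> P) (SA E1 sigma1 P K \<theta> M1)"
      by (rule not_iso) (use U1[OF h3] Ph1[OF h3] U3[OF h2] Ph3[OF h2] in blast)+
  next
    assume h2: "2 dvd card K"
    show "\<not> alg_isomorphic (E2 \<times>\<times> P) (SA E2 sigma3 P K \<theta> M3) (E1 \<times>\<times> P) (SA E1 sigma2 P K \<theta> M2)"
      by (rule not_iso) (use U2[OF h2] Ps2[OF h2] U3[OF h2] Ps3[OF h2] M23[OF h2] in blast)+
  qed
qed

end
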